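(* Let $\mathcal{G}=(\mathcal{V},\mathcal{E})$ be a graph, let $\epsilon>0$, $\Lambda>0$, $k>0$ and $\gamma\in(0,1)$, and let $\mathcal{Z}$ be a $k$-covering of $\mathcal{G}$ of size $Z$. Then there is an algorithm $\mathcal{A}$ that is $\epsilon$-differentially private on $\mathcal{G}$ such that for any $w:\mathcal{E}\to[0,\Lambda]$, with probability at least $1-\gamma$, $\mathcal{A}(w)$ releases all-pairs distances with approximation error $O\big(k\Lambda+Z^2\epsilon^{-1}\log(Z/\gamma)\big)$ per distance.
   Context: Private edge weight model: for a graph $\mathcal{G}=(\mathcal{V},\mathcal{E})$, a weight function is $w:\mathcal{E}\to\mathbb{R}^+$ (nonnegative reals). Two weight functions $w,w'$ are neighboring if $\sum_{e\in\mathcal{E}}|w(e)-w'(e)|\le 1$. A randomized algorithm $\mathcal{A}$ taking weight functions on $\mathcal{E}$ as input is $\epsilon$-differentially private on $\mathcal{G}$ if for all neighboring $w,w'$ and all sets $S$ of outputs, $\Pr[\mathcal{A}(w)\in S]\le e^{\epsilon}\Pr[\mathcal{A}(w')\in S]$. The weight of a path is the sum of the weights of its edges, and $d_w(x,y)$ is the minimum weight of a path from $x$ to $y$; the approximation error of a released distance for $(x,y)$ is the absolute difference between the released value and $d_w(x,y)$. A subset $\mathcal{Z}\subseteq\mathcal{V}$ is a $k$-covering if for every $v\in\mathcal{V}$ there is $z\in\mathcal{Z}$ joined to $v$ by a path with at most $k$ edges. The $O(\cdot)$ hides absolute constants. *)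

theory Defs
  imports "HOL-Probability.Probability"
begin

text \<open>Graphs: vertices are natural numbers (so that the absolute constant hidden in
  the O-notation can be quantified uniformly over all finite graphs).\<close>

definition graph :: "nat set \<Rightarrow> nat set set \<Rightarrow> bool" where
  "graph V E \<longleftrightarrow> finite V \<and> (\<forall>e\<in>E. e \<subseteq> V \<and> card e = 2)"

definition is_path :: "nat set set \<Rightarrow> nat list \<Rightarrow> bool" where
  "is_path E xs \<longleftrightarrow> xs \<noteq> [] \<and> (\<forall>i < length xs - 1. {xs ! i, xs ! Suc i} \<in> E)"

definition path_weight :: "(nat set \<Rightarrow> real) \<Rightarrow> nat list \<Rightarrow> real" where
  "path_weight w xs = (\<Sum>i < length xs - 1. w {xs ! i, xs ! Suc i})"

definition paths_between :: "nat set set \<Rightarrow> nat \<Rightarrow> nat \<Rightarrow> nat list set" where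
  "paths_between E x y = {xs. is_path E xs \<and> hd xs = x \<and> last xs = y}"

definition connected_pair :: "nat set set \<Rightarrow> nat \<Rightarrow> nat \<Rightarrow> bool" where
  "connected_pair E x y \<longleftrightarrow> paths_between E x y \<noteq> {}"

definition dist_w :: "nat set set \<Rightarrow> (nat set \<Rightarrow> real) \<Rightarrow> nat \<Rightarrow> nat \<Rightarrow> real" where
  "dist_w E w x y = Inf (path_weight w ` paths_between E x y)"

definition k_covering :: "nat set \<Rightarrow> nat set set \<Rightarrow> nat \<Rightarrow> nat set \<Rightarrow> bool" where
  "k_covering V E k Zs \<longleftrightarrow> Zs \<subseteq> V \<and>
     (\<forall>v\<in>V. \<exists>z\<in>Zs. \<exists>xs\<in>paths_between E v z. length xs - 1 \<le> k)"

definition weight_fun :: "nat set set \<Rightarrow> (nat set \<Rightarrow> real) \<Rightarrow> bool" where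
  "weight_fun E w \<longleftrightarrow> (\<forall>e\<in>E. 0 \<le> w e)"

definition neighboring :: "nat set set \<Rightarrow> (nat set \<Rightarrow> real) \<Rightarrow> (nat set \<Rightarrow> real) \<Rightarrow> bool" where
  "neighboring E w w' \<longleftrightarrow> (\<Sum>e\<in>E. \<bar>w e - w' e\<bar>) \<le> 1"

definition out_space :: "nat set \<Rightarrow> (nat \<times> nat \<Rightarrow> real) measure" where
  "out_space V = PiM (V \<times> V) (\<lambda>_. lborel)"

definition randomized_alg :: "nat set \<Rightarrow> ((nat set \<Rightarrow> real) \<Rightarrow> (nat \<times> nat \<Rightarrow> real) measure) \<Rightarrow> bool" where
  "randomized_alg V A \<longleftrightarrow> (\<forall>w. prob_space (A w) \<and> sets (A w) = sets (out_space V))"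

definition diff_private :: "nat set set \<Rightarrow> real \<Rightarrow> ((nat set \<Rightarrow> real) \<Rightarrow> 'b measure) \<Rightarrow> bool" where
  "diff_private E \<epsilon> A \<longleftrightarrow>
     (\<forall>w w'. weight_fun E w \<and> weight_fun E w' \<and> neighboring E w w' \<longrightarrow>
        (\<forall>S \<in> sets (A w). measure (A w) S \<le> exp \<epsilon> * measure (A w') S))"

end

theory Submission
  imports Defs
begin


fun el :: "nat list \<Rightarrow> nat set list" where
  "el (a # b # xs) = {a,b} # el (b # xs)"
| "el _ = []"

lemma el_length: "length (el xs) = length xs - 1"
  by (induction xs rule: el.induct) auto

lemma el_nth: "i < length xs - 1 \<Longrightarrow> el xs ! i = {xs ! i, xs ! Suc i}"
proof (induction xs arbitrary: i rule: el.induct)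
  case (1 a b xs)
  then show ?case by (cases i) auto
qed auto

lemma path_weight_el: "path_weight w xs = sum_list (map w (el xs))"
  unfolding path_weight_def
  by (simp add: sum_list_sum_nth el_length el_nth atLeast0LessThan)

lemma is_path_el: "is_path E xs \<longleftrightarrow> xs \<noteq> [] \<and> set (el xs) \<subseteq> E"
  unfolding is_path_def
  by (auto simp: set_conv_nth el_length el_nth)

lemma el_append: "el (xs @ y # ys) = el (xs @ [y]) @ el (y # ys)"
proof (induction xs rule: el.induct)
  case (1 a b xs) then show ?case by simp
next
  case ("2_1") then show ?case by simp
next
  case ("2_2" v) then show ?case by (cases ys) auto
qed

lemma el_snoc2: "el (xs @ [a, b]) = el (xs @ [a]) @ [{a,b}]"
  using el_append[of xs a "[b]"] by simp

lemma el_rev: "el (rev xs) = rev (el xs)"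
proof (induction xs rule: el.induct)
  case (1 a b xs)
  have "el (rev (a # b # xs)) = el (rev xs @ [b, a])" by simp
  also have "\<dots> = el (rev (b # xs)) @ [{b,a}]" using el_snoc2[of "rev xs" b a] by simp
  finally show ?case using 1 by (simp add: insert_commute)
qed auto

lemma el_subset: "e \<in> set (el xs) \<Longrightarrow> e \<subseteq> set xs"
  by (induction xs rule: el.induct) auto

lemma el_distinct: "distinct xs \<Longrightarrow> distinct (el xs)"
proof (induction xs rule: el.induct)
  case (1 a b xs)
  have "{a,b} \<notin> set (el (b # xs))"
  proof
    assume "{a,b} \<in> set (el (b # xs))"
    then have "a \<in> set (b # xs)" using el_subset by blast
    then show False using 1(2) by simp
  qed
  then show ?case using 1 by simp
qed auto

lemma hd_append_Cons: "hd (xs @ y # ys) = (if xs = [] then y else hd xs)" by (cases xs) auto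

lemma rev_path: "xs \<in> paths_between E x y \<Longrightarrow> rev xs \<in> paths_between E y x"
  by (auto simp: paths_between_def is_path_el el_rev hd_rev last_rev)

lemma rev_weight: "path_weight w (rev xs) = path_weight w xs"
  by (simp add: path_weight_el el_rev rev_map[symmetric])

lemma weight_nonneg:
  assumes "weight_fun E w" "set (el xs) \<subseteq> E"
  shows "0 \<le> path_weight w xs"
  using assms unfolding path_weight_el weight_fun_def
  by (intro sum_list_nonneg) auto

lemma concat_path:
  assumes "p \<in> paths_between E x y" "q \<in> paths_between E y z"
  shows "butlast p @ q \<in> paths_between E x z \<and> path_weight w (butlast p @ q) = path_weight w p + path_weight w q"
proof -
  obtain qs where q: "q = y # qs" using assms(2) unfolding paths_between_def is_path_def
    by (cases q) auto
  have pne: "p \<noteq> []" and hp: "hd p = x" and lp: "last p = y"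
    using assms(1) unfolding paths_between_def is_path_def by auto
  have p: "p = butlast p @ [y]" using pne lp by (metis append_butlast_last_id)
  have e: "el (butlast p @ q) = el p @ el q"
    using el_append[of "butlast p" y qs] p q by simp
  have h: "hd (butlast p @ q) = x"
    using hp p q by (cases "butlast p") auto
  have l: "last (butlast p @ q) = z" using assms(2) q unfolding paths_between_def by simp
  show ?thesis using assms e h l q
    unfolding paths_between_def is_path_el path_weight_el by auto
qed



lemma pb_E: "p \<in> paths_between E x y \<Longrightarrow> set (el p) \<subseteq> E"
  by (simp add: paths_between_def is_path_el)

lemma dist_le:
  assumes "weight_fun E w" "p \<in> paths_between E x y"
  shows "dist_w E w x y \<le> path_weight w p"
  unfolding dist_w_def
proof (rule cInf_lower)
  show "path_weight w p \<in> path_weight w ` paths_between E x y" using assms(2) by simp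
  show "bdd_below (path_weight w ` paths_between E x y)"
    using assms(1) by (intro bdd_belowI[of _ 0]) (auto intro: weight_nonneg[OF _ pb_E])
qed

lemma dist_ge:
  assumes "connected_pair E x y" "\<And>p. p \<in> paths_between E x y \<Longrightarrow> c \<le> path_weight w p"
  shows "c \<le> dist_w E w x y"
  unfolding dist_w_def using assms unfolding connected_pair_def
  by (intro cInf_greatest) auto

lemma dist_nonneg:
  assumes "weight_fun E w" "connected_pair E x y"
  shows "0 \<le> dist_w E w x y"
  using assms by (intro dist_ge) (auto intro: weight_nonneg[OF _ pb_E])

lemma shortcut:
  assumes "weight_fun E w"
  shows "p \<in> paths_between E x y \<Longrightarrow> \<exists>q\<in>paths_between E x y. distinct q \<and> path_weight w q \<le> path_weight w p"
proof (induction "length p" arbitrary: p rule: less_induct)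
  case less
  show ?case
  proof (cases "distinct p")
    case True then show ?thesis using less.prems by auto
  next
    case False
    then obtain A B C v where p: "p = A @ [v] @ B @ [v] @ C" using not_distinct_decomp by blast
    define q where "q = A @ v # C"
    have e1: "el p = el (A @ [v]) @ el (v # B @ [v]) @ el (v # C)"
      unfolding p using el_append[of A v "B @ [v] @ C"] el_append[of "v # B" v C] by simp
    have e2: "el q = el (A @ [v]) @ el (v # C)"
      unfolding q_def using el_append[of A v C] by simp
    have sE: "set (el p) \<subseteq> E" using less.prems by (rule pb_E)
    have nn: "0 \<le> path_weight w (v # B @ [v])"
      using sE e1 by (intro weight_nonneg[OF assms]) auto
    have wq: "path_weight w q \<le> path_weight w p"
      using nn unfolding path_weight_el e1 e2 by simp
    have lq: "last q = last p" unfolding q_def p by (cases C) auto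
    have hq: "hd q = hd p" unfolding q_def p by (cases A) auto
    have qP: "q \<in> paths_between E x y"
      using less.prems sE lq hq e1 e2 unfolding paths_between_def is_path_el q_def by auto
    have "length q < length p" unfolding p q_def by simp
    then obtain r where "r \<in> paths_between E x y" "distinct r" "path_weight w r \<le> path_weight w q"
      using less.hyps qP by blast
    then show ?thesis using wq by force
  qed
qed

lemma triangle:
  assumes "weight_fun E w" "connected_pair E x y" "connected_pair E y z"
  shows "dist_w E w x z \<le> dist_w E w x y + dist_w E w y z"
proof -
  have "\<And>p q. p \<in> paths_between E x y \<Longrightarrow> q \<in> paths_between E y z \<Longrightarrow>
     dist_w E w x z \<le> path_weight w p + path_weight w q"
    using concat_path dist_le[OF assms(1)] by metis
  then have "\<And>q. q \<in> paths_between E y z \<Longrightarrow> dist_w E w x z - path_weight w q \<le> dist_w E w x y"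
    using assms(2) by (intro dist_ge) force+
  then have "\<And>q. q \<in> paths_between E y z \<Longrightarrow> dist_w E w x z - dist_w E w x y \<le> path_weight w q"
    by force
  then have "dist_w E w x z - dist_w E w x y \<le> dist_w E w y z"
    using assms(3) by (intro dist_ge) auto
  then show ?thesis by simp
qed

lemma connected_trans:
  "connected_pair E x y \<Longrightarrow> connected_pair E y z \<Longrightarrow> connected_pair E x z"
  unfolding connected_pair_def using concat_path by blast

lemma connected_sym: "connected_pair E x y \<Longrightarrow> connected_pair E y x"
  unfolding connected_pair_def using rev_path by blast

lemma dist_sym:
  "dist_w E w x y = dist_w E w y x"
proof -
  have "paths_between E y x = rev ` paths_between E x y"
    using rev_path by (auto simp: image_iff) (metis rev_path rev_rev_ident)
  then show ?thesis unfolding dist_w_def by (simp add: image_image rev_weight)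
qed

lemma distinct_diff:
  assumes "distinct p" "set (el p) \<subseteq> E" "finite E"
  shows "path_weight w p - path_weight w' p \<le> (\<Sum>e\<in>E. \<bar>w e - w' e\<bar>)"
proof -
  have d: "distinct (el p)" using assms(1) by (rule el_distinct)
  have "path_weight w p - path_weight w' p = (\<Sum>e\<in>set (el p). w e - w' e)"
    unfolding path_weight_el using d
    by (simp add: sum_list_distinct_conv_sum_set sum_subtractf)
  also have "\<dots> \<le> (\<Sum>e\<in>set (el p). \<bar>w e - w' e\<bar>)" by (intro sum_mono) auto
  also have "\<dots> \<le> (\<Sum>e\<in>E. \<bar>w e - w' e\<bar>)" using assms by (intro sum_mono2) auto
  finally show ?thesis .
qed

lemma sens1:
  assumes "weight_fun E w" "weight_fun E w'" "finite E"
  shows "dist_w E w' x y \<le> dist_w E w x y + (\<Sum>e\<in>E. \<bar>w e - w' e\<bar>)"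
proof (cases "connected_pair E x y")
  case True
  have "\<And>p. p \<in> paths_between E x y \<Longrightarrow> dist_w E w' x y - (\<Sum>e\<in>E. \<bar>w e - w' e\<bar>) \<le> path_weight w p"
  proof -
    fix p assume p: "p \<in> paths_between E x y"
    obtain q where q: "q \<in> paths_between E x y" "distinct q" "path_weight w q \<le> path_weight w p"
      using shortcut[OF assms(1) p] by blast
    have "path_weight w' q - path_weight w q \<le> (\<Sum>e\<in>E. \<bar>w' e - w e\<bar>)"
      using distinct_diff[OF q(2) pb_E[OF q(1)] assms(3)] by simp
    moreover have "dist_w E w' x y \<le> path_weight w' q" using dist_le[OF assms(2) q(1)] .
    moreover have "(\<Sum>e\<in>E. \<bar>w' e - w e\<bar>) = (\<Sum>e\<in>E. \<bar>w e - w' e\<bar>)" by (simp add: abs_minus_commute)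
    ultimately show "dist_w E w' x y - (\<Sum>e\<in>E. \<bar>w e - w' e\<bar>) \<le> path_weight w p" using q(3) by linarith
  qed
  then have "dist_w E w' x y - (\<Sum>e\<in>E. \<bar>w e - w' e\<bar>) \<le> dist_w E w x y"
    using True by (intro dist_ge) auto
  then show ?thesis by simp
next
  case False
  then show ?thesis unfolding connected_pair_def dist_w_def by (simp add: sum_nonneg)
qed

lemma short_weight:
  assumes "\<forall>e\<in>E. w e \<le> \<Lambda>" "set (el p) \<subseteq> E" "length p - 1 \<le> k" "0 \<le> \<Lambda>"
  shows "path_weight w p \<le> real k * \<Lambda>"
proof -
  have "path_weight w p \<le> sum_list (map (\<lambda>_. \<Lambda>) (el p))"
    unfolding path_weight_el using assms by (intro sum_list_mono) auto
  also have "\<dots> = real (length p - 1) * \<Lambda>" by (simp add: sum_list_triv el_length)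
  also have "\<dots> \<le> real k * \<Lambda>" using assms by (intro mult_right_mono) auto
  finally show ?thesis .
qed

lemma dist_upper:
  assumes "graph V E" "weight_fun E w" "\<forall>e\<in>E. w e \<le> \<Lambda>" "0 \<le> \<Lambda>" "x \<in> V" "connected_pair E x y"
  shows "dist_w E w x y \<le> real (card V) * \<Lambda>"
proof -
  obtain p where p: "p \<in> paths_between E x y" using assms(6) unfolding connected_pair_def by blast
  obtain q where q: "q \<in> paths_between E x y" "distinct q" "path_weight w q \<le> path_weight w p"
    using shortcut[OF assms(2) p] by blast
  have qne: "q \<noteq> []" "hd q = x" using q(1) unfolding paths_between_def is_path_def by auto
  have "set q \<subseteq> V"
  proof
    fix v assume v: "v \<in> set q"
    show "v \<in> V"
    proof (cases "length q = 1")
      case True then have "q = [x]" using qne by (cases q) auto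
      then show ?thesis using v assms(5) by simp
    next
      case False
      then have "length q \<ge> 2" using qne by (cases q) (auto simp: Suc_le_eq)
      obtain i where i: "i < length q" "q ! i = v" using v by (auto simp: in_set_conv_nth)
      define j where "j = (if i = 0 then 0 else i - 1)"
      have j: "j < length q - 1" "i = j \<or> i = Suc j" using i \<open>length q \<ge> 2\<close> unfolding j_def by auto
      have "el q ! j \<in> E" using pb_E[OF q(1)] j by (simp add: el_length subset_iff)
      then have "{q ! j, q ! Suc j} \<subseteq> V" using assms(1) el_nth[OF j(1)] unfolding graph_def by auto
      then show ?thesis using j i by auto
    qed
  qed
  then have "length q \<le> card V"
    using assms(1) q(2) unfolding graph_def by (metis card_mono distinct_card)
  then have "length q - 1 \<le> card V" by simp
  then have "path_weight w q \<le> real (card V) * \<Lambda>"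
    using short_weight[OF assms(3) pb_E[OF q(1)] _ assms(4)] by blast
  then show ?thesis using dist_le[OF assms(2) q(1)] by simp
qed



definition NN :: "int \<Rightarrow> real \<Rightarrow> real" where
  "NN K u = (\<Sum>j\<in>{0..K}. exp (- \<bar>of_int j - u\<bar>))"

definition qf :: "int \<Rightarrow> real \<Rightarrow> int \<Rightarrow> real" where
  "qf K u j = (if 0 \<le> j \<and> j \<le> K then exp (- \<bar>of_int j - u\<bar>) / NN K u else 0)"

definition qp :: "int \<Rightarrow> real \<Rightarrow> int pmf" where
  "qp K u = embed_pmf (qf K u)"

lemma NN_pos: "0 \<le> K \<Longrightarrow> 0 < NN K u"
  unfolding NN_def by (intro sum_pos) auto

lemma qf_nonneg: "0 \<le> K \<Longrightarrow> 0 \<le> qf K u j"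
  using NN_pos[of K u] unfolding qf_def by auto

lemma qf_sum: "0 \<le> K \<Longrightarrow> (\<integral>\<^sup>+j. ennreal (qf K u j) \<partial>count_space UNIV) = 1"
proof -
  assume K: "0 \<le> K"
  have "(\<integral>\<^sup>+j. ennreal (qf K u j) \<partial>count_space UNIV) = (\<Sum>j\<in>{0..K}. ennreal (qf K u j))"
    by (intro nn_integral_count_space') (auto simp: qf_def)
  also have "\<dots> = ennreal (\<Sum>j\<in>{0..K}. qf K u j)" using qf_nonneg[OF K] by simp
  also have "(\<Sum>j\<in>{0..K}. qf K u j) = (\<Sum>j\<in>{0..K}. exp (- \<bar>of_int j - u\<bar>)) / NN K u"
    unfolding qf_def by (simp add: sum_divide_distrib)
  also have "\<dots> = 1" using NN_pos[OF K, of u] unfolding NN_def by simp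
  finally show ?thesis by simp
qed

lemma pmf_qp: "0 \<le> K \<Longrightarrow> pmf (qp K u) j = qf K u j"
  unfolding qp_def by (rule pmf_embed_pmf[OF qf_nonneg qf_sum])

lemma NN_ratio: "NN K u' \<le> exp \<bar>u - u'\<bar> * NN K u"
proof -
  have "NN K u' \<le> (\<Sum>j\<in>{0..K}. exp \<bar>u - u'\<bar> * exp (- \<bar>of_int j - u\<bar>))"
    unfolding NN_def
  proof (intro sum_mono)
    fix j :: int
    have "- \<bar>of_int j - u'\<bar> \<le> \<bar>u - u'\<bar> + - \<bar>of_int j - u\<bar>" by linarith
    then show "exp (- \<bar>of_int j - u'\<bar>) \<le> exp \<bar>u - u'\<bar> * exp (- \<bar>of_int j - u\<bar>)"
      by (simp add: exp_add[symmetric])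
  qed
  then show ?thesis unfolding NN_def by (simp add: sum_distrib_left)
qed

lemma qf_ratio:
  assumes K: "0 \<le> K"
  shows "qf K u j \<le> exp (2 * \<bar>u - u'\<bar>) * qf K u' j"
proof (cases "0 \<le> j \<and> j \<le> K")
  case True
  have e: "exp (- \<bar>of_int j - u\<bar>) \<le> exp \<bar>u - u'\<bar> * exp (- \<bar>of_int j - u'\<bar>)"
  proof -
    have "- \<bar>of_int j - u\<bar> \<le> \<bar>u - u'\<bar> + - \<bar>of_int j - u'\<bar>" by linarith
    then show ?thesis by (simp add: exp_add[symmetric])
  qed
  have n: "1 / NN K u \<le> exp \<bar>u - u'\<bar> / NN K u'"
    using NN_ratio[of K u' u] NN_pos[OF K, of u] NN_pos[OF K, of u']
    by (simp add: field_simps abs_minus_commute)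
  have "exp (- \<bar>of_int j - u\<bar>) / NN K u = exp (- \<bar>of_int j - u\<bar>) * (1 / NN K u)" by simp
  also have "\<dots> \<le> (exp \<bar>u - u'\<bar> * exp (- \<bar>of_int j - u'\<bar>)) * (exp \<bar>u - u'\<bar> / NN K u')"
    using e n NN_pos[OF K, of u] by (intro mult_mono) auto
  also have "\<dots> = exp (2 * \<bar>u - u'\<bar>) * exp (- \<bar>of_int j - u'\<bar>) / NN K u'"
    by (simp add: exp_add[symmetric] field_simps)
  finally have X: "exp (- \<bar>of_int j - u\<bar>) / NN K u \<le> exp (2 * \<bar>u - u'\<bar>) * exp (- \<bar>of_int j - u'\<bar>) / NN K u'" .
  show ?thesis using True X unfolding qf_def by simp
qed (auto simp: qf_def)

lemma geo_nat: "finite (S::nat set) \<Longrightarrow> (\<Sum>m\<in>S. exp (- real m)) \<le> 2"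
proof -
  assume S: "finite S"
  define n where "n = Suc (Max (insert 0 S))"
  have sub: "S \<subseteq> {..<n}" unfolding n_def using S by (auto simp: less_Suc_eq_le)
  have r: "exp (-1::real) \<le> 1/2"
  proof -
    have "2 \<le> exp (1::real)" using exp_ge_add_one_self[of 1] by simp
    then show ?thesis by (simp add: exp_minus field_simps)
  qed
  have r1: "exp (-1::real) < 1" by simp
  have "(\<Sum>m\<in>S. exp (- real m)) \<le> (\<Sum>m<n. exp (- real m))"
    using sub by (intro sum_mono2) auto
  also have "\<dots> = (\<Sum>m<n. exp (-1) ^ m)"
    by (intro sum.cong refl) (simp add: exp_of_nat_mult[symmetric])
  also have "\<dots> = (1 - exp (-1) ^ n) / (1 - exp (-1))" using r1 by (simp add: sum_gp_strict)
  also have "\<dots> \<le> 1 / (1 - exp (-1))" using r1 by (intro divide_right_mono) auto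
  also have "\<dots> \<le> 2" using r r1 by (simp add: field_simps)
  finally show ?thesis .
qed

lemma geo_int:
  assumes "finite (S::int set)" "\<forall>s\<in>S. a \<le> s"
  shows "(\<Sum>s\<in>S. exp (- real_of_int (s - a))) \<le> 2"
proof -
  have inj: "inj_on (\<lambda>s. nat (s - a)) S"
  proof (intro inj_onI)
    fix x y assume xy: "x \<in> S" "y \<in> S" "nat (x - a) = nat (y - a)"
    then show "x = y" using xy assms(2) by (metis eq_nat_nat_iff diff_ge_0_iff_ge add.commute diff_add_cancel)
  qed
  have "(\<Sum>s\<in>S. exp (- real_of_int (s - a))) = (\<Sum>s\<in>S. exp (- real (nat (s - a))))"
    using assms(2) by (intro sum.cong refl) simp
  also have "\<dots> = (\<Sum>m\<in>(\<lambda>s. nat (s - a)) ` S. exp (- real m))"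
    using inj by (simp add: sum.reindex)
  also have "\<dots> \<le> 2" using assms(1) by (intro geo_nat) simp
  finally show ?thesis .
qed

lemma tail_sum:
  fixes u T :: real
  assumes "0 \<le> T"
  shows "(\<Sum>j\<in>{j\<in>{0..K}. \<bar>of_int j - u\<bar> > T}. exp (- \<bar>of_int j - u\<bar>)) \<le> 4 * exp (- T)"
proof -
  define S1 where "S1 = {j\<in>{0..K}. of_int j - u > T}"
  define S2 where "S2 = {j\<in>{0..K}. of_int j - u < - T}"
  have split: "{j\<in>{0..K}. \<bar>of_int j - u\<bar> > T} = S1 \<union> S2" unfolding S1_def S2_def by (auto split: abs_split)
  have fin: "finite S1" "finite S2"
    by (rule finite_subset[of _ "{0..K}"], force simp: S1_def S2_def, simp)+
  have disj: "S1 \<inter> S2 = {}" unfolding S1_def S2_def using assms by auto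
  define a where "a = \<lfloor>u + T\<rfloor> + 1"
  have a1: "\<forall>s\<in>S1. a \<le> s" unfolding S1_def a_def by (auto simp: floor_less_iff[symmetric] ) linarith
  have a2: "of_int a - u > T" unfolding a_def by linarith
  have "(\<Sum>j\<in>S1. exp (- \<bar>of_int j - u\<bar>)) = (\<Sum>j\<in>S1. exp (- (of_int a - u)) * exp (- real_of_int (j - a)))"
    unfolding S1_def using assms by (intro sum.cong refl) (auto simp: exp_add[symmetric])
  also have "\<dots> = exp (- (of_int a - u)) * (\<Sum>j\<in>S1. exp (- real_of_int (j - a)))"
    by (simp add: sum_distrib_left)
  also have "\<dots> \<le> exp (- T) * 2"
    using geo_int[OF fin(1) a1] a2 by (intro mult_mono) (auto intro: sum_nonneg)
  finally have s1: "(\<Sum>j\<in>S1. exp (- \<bar>of_int j - u\<bar>)) \<le> 2 * exp (- T)" by simp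
  define b where "b = \<lceil>u - T\<rceil> - 1"
  have b1: "\<forall>s\<in>uminus ` S2. - b \<le> s" unfolding S2_def b_def by (auto) linarith
  have b2: "u - of_int b > T" unfolding b_def by linarith
  have "(\<Sum>j\<in>S2. exp (- \<bar>of_int j - u\<bar>)) = (\<Sum>j\<in>S2. exp (- (u - of_int b)) * exp (- real_of_int (- j - - b)))"
    unfolding S2_def using assms by (intro sum.cong refl) (auto simp: exp_add[symmetric])
  also have "\<dots> = exp (- (u - of_int b)) * (\<Sum>s\<in>uminus ` S2. exp (- real_of_int (s - - b)))"
    by (simp add: sum_distrib_left sum.reindex)
  also have "\<dots> \<le> exp (- T) * 2"
    using geo_int[OF _ b1] fin(2) b2 by (intro mult_mono) (auto intro: sum_nonneg)
  finally have s2: "(\<Sum>j\<in>S2. exp (- \<bar>of_int j - u\<bar>)) \<le> 2 * exp (- T)" by simp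
  show ?thesis unfolding split using s1 s2 by (simp add: sum.union_disjoint[OF fin disj])
qed

lemma NN_lower:
  fixes u :: real
  assumes "0 \<le> u" "u \<le> of_int K"
  shows "exp (-1) \<le> NN K u"
proof -
  have j: "\<lfloor>u\<rfloor> \<in> {0..K}" using assms by (auto simp: floor_le_iff)
  have "exp (-1) \<le> exp (- \<bar>of_int \<lfloor>u\<rfloor> - u\<bar>)" by (auto intro: abs_leI) linarith+
  also have "\<dots> \<le> NN K u" unfolding NN_def
    by (rule member_le_sum[OF j]) auto
  finally show ?thesis .
qed

lemma set_qp: "0 \<le> K \<Longrightarrow> set_pmf (qp K u) \<subseteq> {0..K}"
  by (auto simp: set_pmf_eq pmf_qp qf_def split: if_splits)

lemma qp_tail:
  fixes u T :: real
  assumes "0 \<le> u" "u \<le> of_int K" "0 \<le> T"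
  shows "measure_pmf.prob (qp K u) {j. \<bar>of_int j - u\<bar> > T} \<le> 12 * exp (- T)"
proof -
  have K: "0 \<le> K" using assms by linarith
  let ?S = "{j\<in>{0..K}. \<bar>of_int j - u\<bar> > T}"
  have "measure_pmf.prob (qp K u) {j. \<bar>of_int j - u\<bar> > T}
      = measure_pmf.prob (qp K u) ({j. \<bar>of_int j - u\<bar> > T} \<inter> set_pmf (qp K u))"
    by (simp add: measure_Int_set_pmf)
  also have "\<dots> \<le> measure_pmf.prob (qp K u) ?S"
    using set_qp[OF K, of u] by (intro measure_pmf.finite_measure_mono) auto
  also have "\<dots> = (\<Sum>j\<in>?S. qf K u j)"
  proof -
    have fin: "finite ?S" by (rule finite_subset[of _ "{0..K}"]) auto
    show ?thesis by (subst measure_measure_pmf_finite[OF fin]) (simp add: pmf_qp[OF K])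
  qed
  also have "\<dots> = (\<Sum>j\<in>?S. exp (- \<bar>of_int j - u\<bar>)) / NN K u"
    unfolding qf_def by (simp add: sum_divide_distrib)
  also have "\<dots> \<le> (4 * exp (- T)) / exp (-1)"
    using tail_sum[OF assms(3), where K=K and u=u] NN_lower[OF assms(1,2)]
    by (intro frac_le) (auto intro: sum_nonneg)
  also have "\<dots> = 4 * exp 1 * exp (- T)" by (simp add: exp_minus field_simps)
  also have "\<dots> \<le> 12 * exp (- T)" using exp_le by simp
  finally show ?thesis .
qed



lemma pmf_ratio_measure:
  assumes "\<And>x. pmf p x \<le> c * pmf q x" "0 \<le> c"
  shows "measure_pmf.prob p X \<le> c * measure_pmf.prob q X"
proof -
  have "emeasure (measure_pmf p) X = (\<integral>\<^sup>+x. indicator X x \<partial>measure_pmf p)"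
    by simp
  also have "\<dots> = (\<integral>\<^sup>+x. ennreal (pmf p x) * indicator X x \<partial>count_space UNIV)"
    by (rule nn_integral_measure_pmf)
  also have "\<dots> \<le> (\<integral>\<^sup>+x. ennreal c * (ennreal (pmf q x) * indicator X x) \<partial>count_space UNIV)"
    using assms by (intro nn_integral_mono) (auto simp: indicator_def ennreal_mult[symmetric] intro!: ennreal_leI)
  also have "\<dots> = ennreal c * (\<integral>\<^sup>+x. ennreal (pmf q x) * indicator X x \<partial>count_space UNIV)"
    by (rule nn_integral_cmult) simp
  also have "(\<integral>\<^sup>+x. ennreal (pmf q x) * indicator X x \<partial>count_space UNIV) = emeasure (measure_pmf q) X"
    by (simp add: nn_integral_measure_pmf[symmetric])
  finally have "ennreal (measure_pmf.prob p X) \<le> ennreal (c * measure_pmf.prob q X)"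
    using assms(2) by (simp add: measure_pmf.emeasure_eq_measure ennreal_mult)
  then show ?thesis using assms(2) by (simp add: ennreal_le_iff mult_nonneg_nonneg)
qed

lemma G_meas:
  assumes "finite V"
  shows "{f \<in> space (out_space V). \<forall>x\<in>V. \<forall>y\<in>V. P x y \<longrightarrow> \<bar>f (x, y) - r x y\<bar> \<le> B x y} \<in> sets (out_space V)"
  unfolding out_space_def using assms by measurable

lemma lnb:
  fixes z \<gamma> :: real
  assumes "2 \<le> z" "0 < \<gamma>" "\<gamma> < 1"
  shows "ln (12 * z ^ 2 / \<gamma>) \<le> 6 * ln (z / \<gamma>)" "0 \<le> ln (12 * z ^ 2 / \<gamma>)"
proof -
  have l2: "ln 2 \<le> ln z" using assms by simp
  have l12: "ln 12 \<le> 4 * ln (2::real)"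
  proof -
    have "ln (12::real) \<le> ln 16" by simp
    also have "ln (16::real) = ln (2 ^ 4)" by simp
    also have "\<dots> = 4 * ln 2" by (subst ln_realpow) auto
    finally show ?thesis .
  qed
  have lg: "ln \<gamma> < 0" using assms by simp
  have zp: "0 < z" using assms by simp
  have "ln (12 * z ^ 2 / \<gamma>) = ln 12 + 2 * ln z - ln \<gamma>"
    using zp assms by (simp add: ln_div ln_mult ln_realpow)
  moreover have "ln (z / \<gamma>) = ln z - ln \<gamma>" using zp assms by (simp add: ln_div)
  ultimately show "ln (12 * z ^ 2 / \<gamma>) \<le> 6 * ln (z / \<gamma>)" using l2 l12 lg by linarith
  have "0 \<le> ln 12 + 2 * ln z - ln \<gamma>" using l2 lg by (smt (verit) ln_ge_zero)
  then show "0 \<le> ln (12 * z ^ 2 / \<gamma>)" using \<open>ln (12 * z ^ 2 / \<gamma>) = _\<close> by simp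
qed

lemma dist_self:
  assumes "weight_fun E w"
  shows "dist_w E w a a = 0"
proof -
  have p: "[a] \<in> paths_between E a a" by (simp add: paths_between_def is_path_def)
  have "dist_w E w a a \<le> 0" using dist_le[OF assms p] by (simp add: path_weight_def)
  moreover have "0 \<le> dist_w E w a a" using dist_nonneg[OF assms] p unfolding connected_pair_def by blast
  ultimately show ?thesis by simp
qed

lemma approx:
  assumes wf: "weight_fun E w" and wb: "\<forall>e\<in>E. w e \<le> \<Lambda>" and L: "0 \<le> \<Lambda>"
    and xy: "connected_pair E x y"
    and px: "px \<in> paths_between E x a" "length px - 1 \<le> k"
    and py: "py \<in> paths_between E y b" "length py - 1 \<le> k"
  shows "\<bar>dist_w E w x y - dist_w E w a b\<bar> \<le> 2 * (real k * \<Lambda>) \<and> connected_pair E a b"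
proof -
  have cxa: "connected_pair E x a" using px unfolding connected_pair_def by blast
  have cyb: "connected_pair E y b" using py unfolding connected_pair_def by blast
  have dxa: "dist_w E w x a \<le> real k * \<Lambda>"
    using dist_le[OF wf px(1)] short_weight[OF wb pb_E[OF px(1)] px(2) L] by linarith
  have dyb: "dist_w E w y b \<le> real k * \<Lambda>"
    using dist_le[OF wf py(1)] short_weight[OF wb pb_E[OF py(1)] py(2) L] by linarith
  have cay: "connected_pair E a y" using connected_trans[OF connected_sym[OF cxa] xy] .
  have cab: "connected_pair E a b" using connected_trans[OF cay cyb] .
  have cxb: "connected_pair E x b" using connected_trans[OF xy cyb] .
  have t1: "dist_w E w x y \<le> dist_w E w x a + dist_w E w a y" using triangle[OF wf cxa cay] .
  have t2: "dist_w E w a y \<le> dist_w E w a b + dist_w E w b y"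
    using triangle[OF wf cab connected_sym[OF cyb]] .
  have t3: "dist_w E w a b \<le> dist_w E w a x + dist_w E w x b"
    using triangle[OF wf connected_sym[OF cxa] cxb] .
  have t4: "dist_w E w x b \<le> dist_w E w x y + dist_w E w y b" using triangle[OF wf xy cyb] .
  have s: "dist_w E w b y = dist_w E w y b" "dist_w E w a x = dist_w E w x a" using dist_sym by auto
  show ?thesis using t1 t2 t3 t4 s dxa dyb cab by (auto simp: abs_le_iff)
qed



lemma main:
  fixes V :: "nat set" and E Zs and \<epsilon> \<Lambda> \<gamma> :: real and k :: nat
  assumes G: "graph V E" and eps: "\<epsilon> > 0" and Lam: "\<Lambda> > 0" and kpos: "k > 0"
    and gam: "0 < \<gamma>" "\<gamma> < 1" and cov: "k_covering V E k Zs"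
  shows "\<exists>A. randomized_alg V A \<and> diff_private E \<epsilon> A \<and>
        (\<forall>w. (\<forall>e\<in>E. 0 \<le> w e \<and> w e \<le> \<Lambda>) \<longrightarrow>
           measure (A w) {f \<in> space (out_space V). \<forall>x\<in>V. \<forall>y\<in>V. connected_pair E x y \<longrightarrow>
              \<bar>f (x, y) - dist_w E w x y\<bar>
                \<le> 24 * (real k * \<Lambda> + real (card Zs) ^ 2 / \<epsilon> * ln (real (card Zs) / \<gamma>))}
           \<ge> 1 - \<gamma>)"
proof -
  define Z where "Z = card Zs"
  define \<delta> where "\<delta> = 2 * (real Z ^ 2 + 1) / \<epsilon>"
  have \<delta>pos: "\<delta> > 0" unfolding \<delta>_def using eps
    by (intro divide_pos_pos mult_pos_pos add_nonneg_pos) auto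
  define K :: int where "K = \<lceil>real (card V) * \<Lambda> / \<delta>\<rceil>"
  have K0: "0 \<le> K"
  proof -
    have "0 \<le> real (card V) * \<Lambda> / \<delta>" using \<delta>pos Lam by simp
    then show ?thesis unfolding K_def by linarith
  qed
  define M where "M = of_int K * \<delta>"
  have VM: "real (card V) * \<Lambda> \<le> M" unfolding M_def K_def using \<delta>pos
    by (simp add: pos_divide_le_eq[symmetric])
  define I where "I = {(a, b). a \<in> Zs \<and> b \<in> Zs \<and> a \<noteq> b}"
  have finV: "finite V" using G unfolding graph_def by simp
  have ZsV: "Zs \<subseteq> V" using cov unfolding k_covering_def by simp
  have finZ: "finite Zs" using finV ZsV finite_subset by blast
  have finE: "finite E"
  proof -
    have "E \<subseteq> Pow V" using G unfolding graph_def by auto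
    then show ?thesis using finV finite_subset by blast
  qed
  have finI: "finite I" unfolding I_def
    by (rule finite_subset[of _ "Zs \<times> Zs"]) (auto simp: finZ)
  have cardI: "card I \<le> Z ^ 2"
  proof -
    have "card I \<le> card (Zs \<times> Zs)" unfolding I_def by (intro card_mono) (auto simp: finZ)
    then show ?thesis by (simp add: Z_def card_cartesian_product power2_eq_square)
  qed
  define u where "u w i = max 0 (min (dist_w E w (fst i) (snd i)) M) / \<delta>" for w i
  have u_range: "0 \<le> u w i \<and> u w i \<le> of_int K" for w i
    unfolding u_def M_def using \<delta>pos K0 by (auto simp: divide_le_eq)
  define P where "P w = Pi_pmf I 0 (\<lambda>i. qp K (u w i))" for w
  define cen where "cen x = (SOME z. z \<in> Zs \<and> (\<exists>xs\<in>paths_between E x z. length xs - 1 \<le> k))" for x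
  have cen: "cen x \<in> Zs \<and> (\<exists>xs\<in>paths_between E x (cen x). length xs - 1 \<le> k)" if "x \<in> V" for x
  proof -
    have "\<exists>z. z \<in> Zs \<and> (\<exists>xs\<in>paths_between E x z. length xs - 1 \<le> k)"
      using cov that unfolding k_covering_def by blast
    then show ?thesis unfolding cen_def by (rule someI_ex)
  qed
  define g where "g v = restrict (\<lambda>(x, y). if cen x = cen y then 0 else \<delta> * of_int (v (cen x, cen y))) (V \<times> V)"
    for v :: "nat \<times> nat \<Rightarrow> int"
  define A where "A w = distr (measure_pmf (P w)) (out_space V) g" for w
  have gmeas: "g \<in> measurable (measure_pmf (P w)) (out_space V)" for w
    by (auto simp: g_def out_space_def space_PiM)
  have ralg: "randomized_alg V A"
    unfolding randomized_alg_def A_def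
    using measure_pmf.prob_space_distr[OF gmeas] by simp
  have clamp: "\<bar>max 0 (min a M) - max 0 (min b M)\<bar> \<le> \<bar>a - b\<bar>" for a b :: real
    by (simp add: max_def min_def abs_if)
  have factor: "exp (2 / \<delta>) ^ card I \<le> exp \<epsilon>"
  proof -
    have "exp (2 / \<delta>) ^ card I = exp (real (card I) * (2 / \<delta>))"
      by (rule exp_of_nat_mult[symmetric])
    also have "real (card I) * (2 / \<delta>) = real (card I) * \<epsilon> / (real Z ^ 2 + 1)"
    proof -
      have hz: "0 < real Z ^ 2 + 1" by (simp add: add_nonneg_pos)
      show ?thesis unfolding \<delta>_def using eps hz by (simp add: field_simps)
    qed
    also have "\<dots> \<le> \<epsilon>"
    proof -
      have "real (card I) \<le> real Z ^ 2 + 1" 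
      proof -
        have "real (card I) \<le> real Z ^ 2" using cardI by (metis of_nat_le_iff of_nat_power)
        then show ?thesis by linarith
      qed
      then have "real (card I) * \<epsilon> \<le> (real Z ^ 2 + 1) * \<epsilon>" using eps by (intro mult_right_mono) auto
      moreover have "0 < real Z ^ 2 + 1" by (simp add: add_nonneg_pos)
      ultimately show ?thesis by (simp add: divide_le_eq mult.commute)
    qed
    finally show ?thesis by simp
  qed
  have dp: "diff_private E \<epsilon> A"
    unfolding diff_private_def
  proof (intro allI impI ballI)
    fix w w' S assume ww: "weight_fun E w \<and> weight_fun E w' \<and> neighboring E w w'" and S: "S \<in> sets (A w)"
    have S': "S \<in> sets (out_space V)" using S by (simp add: A_def)
    have du: "\<bar>u w i - u w' i\<bar> \<le> 1 / \<delta>" for i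
    proof -
      have n1: "(\<Sum>e\<in>E. \<bar>w e - w' e\<bar>) \<le> 1" using ww unfolding neighboring_def by simp
      have n2: "(\<Sum>e\<in>E. \<bar>w' e - w e\<bar>) \<le> 1" using n1 by (simp add: abs_minus_commute)
      have "\<bar>dist_w E w (fst i) (snd i) - dist_w E w' (fst i) (snd i)\<bar> \<le> 1"
        using sens1[of E w w' "fst i" "snd i"] sens1[of E w' w "fst i" "snd i"] ww finE n1 n2 by auto
      then have "\<bar>max 0 (min (dist_w E w (fst i) (snd i)) M) - max 0 (min (dist_w E w' (fst i) (snd i)) M)\<bar> \<le> 1"
        using clamp order_trans by blast
      then show ?thesis unfolding u_def using \<delta>pos
        by (simp add: diff_divide_distrib[symmetric] abs_divide divide_right_mono)
    qed
    have pr: "pmf (P w) f \<le> exp \<epsilon> * pmf (P w') f" for f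
    proof (cases "\<forall>x. x \<notin> I \<longrightarrow> f x = 0")
      case True
      have "pmf (P w) f = (\<Prod>i\<in>I. pmf (qp K (u w i)) (f i))"
        unfolding P_def using True by (simp add: pmf_Pi[OF finI])
      also have "\<dots> \<le> (\<Prod>i\<in>I. exp (2 / \<delta>) * pmf (qp K (u w' i)) (f i))"
      proof (intro prod_mono conjI)
        fix i assume "i \<in> I"
        show "0 \<le> pmf (qp K (u w i)) (f i)" by simp
        have "pmf (qp K (u w i)) (f i) \<le> exp (2 * \<bar>u w i - u w' i\<bar>) * pmf (qp K (u w' i)) (f i)"
          using qf_ratio[OF K0] by (simp add: pmf_qp[OF K0])
        also have "\<dots> \<le> exp (2 / \<delta>) * pmf (qp K (u w' i)) (f i)"
          using du[of i] by (intro mult_right_mono) auto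
        finally show "pmf (qp K (u w i)) (f i) \<le> exp (2 / \<delta>) * pmf (qp K (u w' i)) (f i)" .
      qed
      also have "\<dots> = exp (2 / \<delta>) ^ card I * (\<Prod>i\<in>I. pmf (qp K (u w' i)) (f i))"
        by (simp add: prod.distrib)
      also have "\<dots> \<le> exp \<epsilon> * (\<Prod>i\<in>I. pmf (qp K (u w' i)) (f i))"
        using factor by (intro mult_right_mono) (auto intro: prod_nonneg)
      also have "(\<Prod>i\<in>I. pmf (qp K (u w' i)) (f i)) = pmf (P w') f"
        unfolding P_def using True by (simp add: pmf_Pi[OF finI])
      finally show ?thesis .
    next
      case False
      then show ?thesis unfolding P_def by (auto simp: pmf_Pi[OF finI])
    qed
    have "measure (A w) S = measure_pmf.prob (P w) (g -` S)"
      unfolding A_def using S' gmeas by (simp add: measure_distr)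
    also have "\<dots> \<le> exp \<epsilon> * measure_pmf.prob (P w') (g -` S)"
      using pr by (intro pmf_ratio_measure) auto
    also have "measure_pmf.prob (P w') (g -` S) = measure (A w') S"
      unfolding A_def using S' gmeas by (simp add: measure_distr)
    finally show "measure (A w) S \<le> exp \<epsilon> * measure (A w') S" .
  qed
  have acc: "measure (A w) {f \<in> space (out_space V). \<forall>x\<in>V. \<forall>y\<in>V. connected_pair E x y \<longrightarrow>
              \<bar>f (x, y) - dist_w E w x y\<bar>
                \<le> 24 * (real k * \<Lambda> + real (card Zs) ^ 2 / \<epsilon> * ln (real (card Zs) / \<gamma>))}
           \<ge> 1 - \<gamma>" (is "_ \<le> measure _ ?G") if w: "\<forall>e\<in>E. 0 \<le> w e \<and> w e \<le> \<Lambda>" for w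
  proof -
    have wf: "weight_fun E w" using w unfolding weight_fun_def by auto
    have wb: "\<forall>e\<in>E. w e \<le> \<Lambda>" using w by auto
    have Gm: "?G \<in> sets (out_space V)" by (rule G_meas[OF finV])
    define T where "T = ln (12 * real Z ^ 2 / \<gamma>)"
    define Good where "Good = {v. \<forall>i\<in>I. \<bar>of_int (v i) - u w i\<bar> \<le> T}"
    have IZ: "2 \<le> real Z" if iI0: "i \<in> I" for i
    proof -
      obtain a b where "i = (a, b)" "a \<in> Zs" "b \<in> Zs" "a \<noteq> b" using iI0 unfolding I_def by auto
      then have "{a, b} \<subseteq> Zs" by auto
      then have "card {a, b} \<le> Z" unfolding Z_def using finZ by (rule card_mono[rotated])
      then show ?thesis using \<open>a \<noteq> b\<close> by simp
    qed
    have sub: "Good \<subseteq> g -` ?G"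
    proof
      fix v assume v: "v \<in> Good"
      have sp: "g v \<in> space (out_space V)" by (auto simp: g_def out_space_def space_PiM)
      have "\<bar>g v (x, y) - dist_w E w x y\<bar>
                \<le> 24 * (real k * \<Lambda> + real (card Zs) ^ 2 / \<epsilon> * ln (real (card Zs) / \<gamma>))"
        if xy: "x \<in> V" "y \<in> V" "connected_pair E x y" for x y
      proof -
        obtain px where px: "px \<in> paths_between E x (cen x)" "length px - 1 \<le> k" using cen[OF xy(1)] by blast
        obtain py where py: "py \<in> paths_between E y (cen y)" "length py - 1 \<le> k" using cen[OF xy(2)] by blast
        have ap: "\<bar>dist_w E w x y - dist_w E w (cen x) (cen y)\<bar> \<le> 2 * (real k * \<Lambda>)"
             "connected_pair E (cen x) (cen y)"
          using approx[OF wf wb _ xy(3) px py] Lam by auto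
        have kL: "0 \<le> real k * \<Lambda>" using Lam by simp
        have nn2: "0 \<le> real (card Zs) ^ 2 / \<epsilon> * ln (real (card Zs) / \<gamma>)"
        proof (cases "card Zs = 0")
          case False
          then have "1 \<le> real (card Zs) / \<gamma>" using gam by (simp add: field_simps)
          then show ?thesis using eps by (intro mult_nonneg_nonneg) auto
        qed simp
        show ?thesis
        proof (cases "cen x = cen y")
          case True
          have "g v (x, y) = 0" using xy True by (simp add: g_def)
          moreover have "dist_w E w (cen x) (cen y) = 0" using True dist_self[OF wf] by simp
          ultimately have "\<bar>g v (x, y) - dist_w E w x y\<bar> \<le> 2 * (real k * \<Lambda>)" using ap(1) by simp
          then show ?thesis using kL nn2 unfolding abs_le_iff distrib_left by linarith
        next
          case False
          let ?i = "(cen x, cen y)"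
          have iI: "?i \<in> I" using False cen[OF xy(1)] cen[OF xy(2)] unfolding I_def by auto
          have Z2: "2 \<le> real Z" using IZ[OF iI] .
          have vi: "\<bar>of_int (v ?i) - u w ?i\<bar> \<le> T" using v iI unfolding Good_def by auto
          have d0: "0 \<le> dist_w E w (cen x) (cen y)" using dist_nonneg[OF wf ap(2)] .
          have dM: "dist_w E w (cen x) (cen y) \<le> M"
          proof -
            have cV: "cen x \<in> V" using cen[OF xy(1)] ZsV by blast
            show ?thesis using dist_upper[OF G wf wb less_imp_le[OF Lam] cV ap(2)] VM by linarith
          qed
          have uw: "u w ?i = dist_w E w (cen x) (cen y) / \<delta>" unfolding u_def using d0 dM by simp
          have gv: "g v (x, y) = \<delta> * of_int (v ?i)" using xy False by (simp add: g_def)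
          have "\<bar>g v (x, y) - dist_w E w (cen x) (cen y)\<bar> = \<delta> * \<bar>of_int (v ?i) - u w ?i\<bar>"
          proof -
            have h: "\<delta> * (of_int (v ?i) - u w ?i) = g v (x, y) - dist_w E w (cen x) (cen y)"
              unfolding gv uw using \<delta>pos by (simp add: field_simps)
            have "\<bar>\<delta> * (of_int (v ?i) - u w ?i)\<bar> = \<delta> * \<bar>of_int (v ?i) - u w ?i\<bar>"
              using \<delta>pos by (simp add: abs_mult)
            then show ?thesis using h by simp
          qed
          also have "\<dots> \<le> \<delta> * T" using vi \<delta>pos by simp
          also have "\<dots> \<le> (4 * real Z ^ 2 / \<epsilon>) * (6 * ln (real Z / \<gamma>))"
          proof (intro mult_mono)
            have "(2::real) ^ 2 \<le> real Z ^ 2" using Z2 by (intro power_mono) auto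
            then have "2 * (real Z ^ 2 + 1) \<le> 4 * real Z ^ 2" by simp
            then show "\<delta> \<le> 4 * real Z ^ 2 / \<epsilon>" unfolding \<delta>_def using eps
              by (intro divide_right_mono) auto
            show "T \<le> 6 * ln (real Z / \<gamma>)" unfolding T_def using lnb(1)[OF Z2 gam] .
            show "0 \<le> 4 * real Z ^ 2 / \<epsilon>" using eps by simp
            show "0 \<le> T" unfolding T_def using lnb(2)[OF Z2 gam] .
          qed
          finally have e1: "\<bar>g v (x, y) - dist_w E w (cen x) (cen y)\<bar> \<le> 24 * (real Z ^ 2 / \<epsilon> * ln (real Z / \<gamma>))"
            by simp
          have e2: "\<bar>dist_w E w x y - dist_w E w (cen x) (cen y)\<bar> \<le> 2 * (real k * \<Lambda>)" using ap(1) .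
          have e1': "\<bar>g v (x, y) - dist_w E w (cen x) (cen y)\<bar> \<le> 24 * (real (card Zs) ^ 2 / \<epsilon> * ln (real (card Zs) / \<gamma>))"
            using e1 unfolding Z_def .
          show ?thesis using e1' e2 kL unfolding abs_le_iff distrib_left by linarith
        qed
      qed
      then have "\<forall>x\<in>V. \<forall>y\<in>V. connected_pair E x y \<longrightarrow> \<bar>g v (x, y) - dist_w E w x y\<bar>
                \<le> 24 * (real k * \<Lambda> + real (card Zs) ^ 2 / \<epsilon> * ln (real (card Zs) / \<gamma>))" by blast
      then show "v \<in> g -` ?G" using sp by simp
    qed
    have tail: "measure_pmf.prob (P w) {v. \<bar>of_int (v i) - u w i\<bar> > T} \<le> \<gamma> / real Z ^ 2" if iI: "i \<in> I" for i
    proof -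
      have Z2: "2 \<le> real Z" using IZ[OF iI] .
      have "measure_pmf.prob (P w) {v. \<bar>of_int (v i) - u w i\<bar> > T}
          = measure_pmf.prob (map_pmf (\<lambda>v. v i) (P w)) {j. \<bar>of_int j - u w i\<bar> > T}" by simp
      also have "map_pmf (\<lambda>v. v i) (P w) = qp K (u w i)"
        unfolding P_def by (subst Pi_pmf_component[OF finI]) (simp add: iI)
      also have "measure_pmf.prob (qp K (u w i)) {j. \<bar>of_int j - u w i\<bar> > T} \<le> 12 * exp (- T)"
        using qp_tail[of "u w i" K T] u_range[of w i] lnb(2)[OF Z2 gam] unfolding T_def by simp
      also have "12 * exp (- T) = \<gamma> / real Z ^ 2"
      proof -
        have "0 < 12 * real Z ^ 2 / \<gamma>" using Z2 gam by simp
        then show ?thesis unfolding T_def using Z2 gam by (simp add: exp_minus)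
      qed
      finally show ?thesis .
    qed
    have "measure_pmf.prob (P w) (UNIV - Good) = measure_pmf.prob (P w) (\<Union>i\<in>I. {v. \<bar>of_int (v i) - u w i\<bar> > T})"
    proof -
      have "UNIV - Good = (\<Union>i\<in>I. {v. \<bar>of_int (v i) - u w i\<bar> > T})"
        unfolding Good_def by (auto simp: not_le)
      then show ?thesis by simp
    qed
    also have "\<dots> \<le> (\<Sum>i\<in>I. measure_pmf.prob (P w) {v. \<bar>of_int (v i) - u w i\<bar> > T})"
      by (intro measure_pmf.finite_measure_subadditive_finite finI) auto
    also have "\<dots> \<le> (\<Sum>i\<in>I. \<gamma> / real Z ^ 2)" using tail by (intro sum_mono) auto
    also have "\<dots> \<le> \<gamma>"
    proof (cases "I = {}")
      case False
      then obtain i where "i \<in> I" by blast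
      then have Z2: "2 \<le> real Z" using IZ by blast
      have "real (card I) \<le> real Z ^ 2" using cardI by (metis of_nat_le_iff of_nat_power)
      then have "real (card I) * \<gamma> \<le> real Z ^ 2 * \<gamma>" using gam by (intro mult_right_mono) auto
      then show ?thesis using Z2 by (simp add: field_simps)
    qed (use gam in simp)
    finally have bad: "measure_pmf.prob (P w) (UNIV - Good) \<le> \<gamma>" .
    have "1 - \<gamma> \<le> measure_pmf.prob (P w) Good"
      using bad measure_pmf.prob_compl[of Good "P w"] by simp
    also have "\<dots> \<le> measure_pmf.prob (P w) (g -` ?G)"
      by (rule measure_pmf.finite_measure_mono[OF sub]) simp
    also have "\<dots> = measure (A w) ?G"
    proof -
      have "measure (A w) ?G = measure_pmf.prob (P w) (g -` ?G \<inter> space (measure_pmf (P w)))"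
        unfolding A_def by (rule measure_distr[OF gmeas Gm])
      then show ?thesis by (simp only: space_measure_pmf Int_UNIV_right)
    qed
    finally show ?thesis .
  qed
  show ?thesis using ralg dp acc by blast
qed


theorem theorem4p7:
  shows "\<exists>C>0. \<forall>V E Zs (\<epsilon>::real) (\<Lambda>::real) (k::nat) (\<gamma>::real).
     graph V E \<and> \<epsilon> > 0 \<and> \<Lambda> > 0 \<and> k > 0 \<and> 0 < \<gamma> \<and> \<gamma> < 1 \<and> k_covering V E k Zs \<longrightarrow>
     (\<exists>A. randomized_alg V A \<and> diff_private E \<epsilon> A \<and>
        (\<forall>w. (\<forall>e\<in>E. 0 \<le> w e \<and> w e \<le> \<Lambda>) \<longrightarrow>
           measure (A w) {f \<in> space (out_space V). \<forall>x\<in>V. \<forall>y\<in>V. connected_pair E x y \<longrightarrow>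
              \<bar>f (x, y) - dist_w E w x y\<bar>
                \<le> C * (real k * \<Lambda> + real (card Zs) ^ 2 / \<epsilon> * ln (real (card Zs) / \<gamma>))}
           \<ge> 1 - \<gamma>))"
proof (intro exI[of _ 24] conjI allI impI)
  fix V :: "nat set" and E :: "nat set set" and Zs :: "nat set" and \<epsilon> \<Lambda> \<gamma> :: real and k :: nat
  assume h: "graph V E \<and> \<epsilon> > 0 \<and> \<Lambda> > 0 \<and> k > 0 \<and> 0 < \<gamma> \<and> \<gamma> < 1 \<and> k_covering V E k Zs"
  show "\<exists>A. randomized_alg V A \<and> diff_private E \<epsilon> A \<and>
        (\<forall>w. (\<forall>e\<in>E. 0 \<le> w e \<and> w e \<le> \<Lambda>) \<longrightarrow>
           measure (A w) {f \<in> space (out_space V). \<forall>x\<in>V. \<forall>y\<in>V. connected_pair E x y \<longrightarrow>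
              \<bar>f (x, y) - dist_w E w x y\<bar>
                \<le> 24 * (real k * \<Lambda> + real (card Zs) ^ 2 / \<epsilon> * ln (real (card Zs) / \<gamma>))}
           \<ge> 1 - \<gamma>)"
    using h by (intro main) auto
qed simp

end
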